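(* Let $M_t=(\mathcal S,\mathcal A,\bar r_t,p_t,s_1)$, $t=1,\dots,T$, be time-homogeneous communicating MDPs on common finite state and action sets, each with diameter at most $D$. Define $V_T=\sum_{t=1}^{T-1}|\rho^*(M_{t+1})-\rho^*(M_t)|$, $V^r_T=\sum_{t=1}^{T-1}\max_{s,a}|\bar r_{t+1}(s,a)-\bar r_t(s,a)|$ and $V^p_T=\sum_{t=1}^{T-1}\max_{s,a}\|p_{t+1}(\cdot\mid s,a)-p_t(\cdot\mid s,a)\|_1$. Then \[V_T\le V^r_T+D\,V^p_T.\]
   Context: A (time-homogeneous) MDP $M=(\mathcal S,\mathcal A,\bar r,p,s_1)$ has mean rewards $\bar r(s,a)\in[0,1]$ and transition probabilities $p(\cdot\mid s,a)$. It is communicating if for any two states $s,s'$, starting in $s$ one can reach $s'$ with positive probability by choosing appropriate actions. Its diameter is $\max_{s\ne s'}\min_\pi\mathbb E[T(s'\mid s,\pi)]$, where $T(s'\mid s,\pi)$ is the first time $s'$ is reached when starting in $s$ and following the stationary policy $\pi:\mathcal S\to\mathcal A$. The average reward of a stationary policy is $\rho(M,\pi)=\lim_{n\to\infty}\frac1n\mathbb E[\sum_{t=1}^n r_t]$ and $\rho^*(M)=\max_\pi\rho(M,\pi)$. *)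

theory Defs
  imports "HOL-Analysis.Analysis"
begin

text \<open>An MDP on finite state type 's and action type 'a is given by mean rewards
  r s a, transition probabilities p s a s' and initial state s1.\<close>

definition is_mdp :: "('s::finite \<Rightarrow> 'a::finite \<Rightarrow> real) \<Rightarrow> ('s \<Rightarrow> 'a \<Rightarrow> 's \<Rightarrow> real) \<Rightarrow> bool" where
  "is_mdp r p \<longleftrightarrow> (\<forall>s a. 0 \<le> r s a \<and> r s a \<le> 1) \<and>
     (\<forall>s a s'. 0 \<le> p s a s') \<and> (\<forall>s a. (\<Sum>s'\<in>UNIV. p s a s') = 1)"

definition communicating :: "('s::finite \<Rightarrow> 'a::finite \<Rightarrow> 's \<Rightarrow> real) \<Rightarrow> bool" where
  "communicating p \<longleftrightarrow> (\<forall>s s'. (s, s') \<in> {(x, y). \<exists>a. p x a y > 0}\<^sup>*)"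

text \<open>Distribution of the state at time k+1 (k = 0,1,...) when following the stationary
  policy pol from state s1.\<close>
fun state_dist :: "('s::finite \<Rightarrow> 'a \<Rightarrow> 's \<Rightarrow> real) \<Rightarrow> ('s \<Rightarrow> 'a) \<Rightarrow> 's \<Rightarrow> nat \<Rightarrow> 's \<Rightarrow> real" where
  "state_dist p pol s1 0 x = (if x = s1 then 1 else 0)"
| "state_dist p pol s1 (Suc k) x = (\<Sum>y\<in>UNIV. state_dist p pol s1 k y * p y (pol y) x)"

definition avg_reward :: "('s::finite \<Rightarrow> 'a \<Rightarrow> real) \<Rightarrow> ('s \<Rightarrow> 'a \<Rightarrow> 's \<Rightarrow> real) \<Rightarrow> 's \<Rightarrow> ('s \<Rightarrow> 'a) \<Rightarrow> real" where
  "avg_reward r p s1 pol =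
     lim (\<lambda>n. (\<Sum>k<n. \<Sum>x\<in>UNIV. state_dist p pol s1 k x * r x (pol x)) / real n)"

definition opt_avg_reward :: "('s::finite \<Rightarrow> 'a::finite \<Rightarrow> real) \<Rightarrow> ('s \<Rightarrow> 'a \<Rightarrow> 's \<Rightarrow> real) \<Rightarrow> 's \<Rightarrow> real" where
  "opt_avg_reward r p s1 = Max (range (avg_reward r p s1))"

text \<open>survive p pol s s' k x = probability that the chain started in s under pol is in x at
  time k and has not visited s' at times 0..k.\<close>
fun survive :: "('s::finite \<Rightarrow> 'a \<Rightarrow> 's \<Rightarrow> real) \<Rightarrow> ('s \<Rightarrow> 'a) \<Rightarrow> 's \<Rightarrow> 's \<Rightarrow> nat \<Rightarrow> 's \<Rightarrow> real" where
  "survive p pol s s' 0 x = (if x = s \<and> x \<noteq> s' then 1 else 0)"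
| "survive p pol s s' (Suc k) x =
     (if x = s' then 0 else (\<Sum>y\<in>UNIV. survive p pol s s' k y * p y (pol y) x))"

text \<open>Expected hitting time E[T(s' | s, pol)] = sum_{k>=0} P(T > k), valued in [0, infinity].\<close>
definition exp_hit_time :: "('s::finite \<Rightarrow> 'a \<Rightarrow> 's \<Rightarrow> real) \<Rightarrow> ('s \<Rightarrow> 'a) \<Rightarrow> 's \<Rightarrow> 's \<Rightarrow> ennreal" where
  "exp_hit_time p pol s s' = (\<Sum>k. ennreal (\<Sum>x\<in>UNIV. survive p pol s s' k x))"

definition diameter :: "('s::finite \<Rightarrow> 'a::finite \<Rightarrow> 's \<Rightarrow> real) \<Rightarrow> ennreal" where
  "diameter p = (SUP ss\<in>{(s, s'). s \<noteq> s'}. INF pol. exp_hit_time p pol (fst ss) (snd ss))"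

end

theory Submission
  imports Defs
begin

definition stoch :: "('s::finite \<Rightarrow> 's \<Rightarrow> real) \<Rightarrow> bool" where
  "stoch P \<longleftrightarrow> (\<forall>x y. 0 \<le> P x y) \<and> (\<forall>x. (\<Sum>y\<in>UNIV. P x y) = 1)"

fun mpow :: "('s::finite \<Rightarrow> 's \<Rightarrow> real) \<Rightarrow> nat \<Rightarrow> 's \<Rightarrow> 's \<Rightarrow> real" where
  "mpow P 0 x y = (if x = y then 1 else 0)"
| "mpow P (Suc k) x y = (\<Sum>z\<in>UNIV. mpow P k x z * P z y)"

lemma mpow_nonneg: "stoch P \<Longrightarrow> 0 \<le> mpow P k x y"
  by (induction k arbitrary: y) (auto simp: stoch_def intro!: sum_nonneg)

lemma mpow_sum1: "stoch P \<Longrightarrow> (\<Sum>y\<in>UNIV. mpow P k x y) = 1"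
proof (induction k)
  case 0 then show ?case by simp
next
  case (Suc k)
  have "(\<Sum>y\<in>UNIV. mpow P (Suc k) x y) = (\<Sum>y\<in>UNIV. \<Sum>z\<in>UNIV. mpow P k x z * P z y)"
    by simp
  also have "\<dots> = (\<Sum>z\<in>UNIV. \<Sum>y\<in>UNIV. mpow P k x z * P z y)"
    by (rule sum.swap)
  also have "\<dots> = (\<Sum>z\<in>UNIV. mpow P k x z * (\<Sum>y\<in>UNIV. P z y))"
    by (simp add: sum_distrib_left)
  also have "\<dots> = 1" using Suc by (simp add: stoch_def)
  finally show ?case .
qed

lemma mpow_le1: "stoch P \<Longrightarrow> mpow P k x y \<le> 1"
proof -
  assume s: "stoch P"
  have "mpow P k x y \<le> (\<Sum>y\<in>UNIV. mpow P k x y)"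
    by (rule member_le_sum) (auto simp: mpow_nonneg[OF s])
  then show ?thesis using mpow_sum1[OF s] by simp
qed

lemma mpow_add: "mpow P (i + k) x y = (\<Sum>z\<in>UNIV. mpow P i x z * mpow P k z y)"
proof (induction k arbitrary: y)
  case 0
  have "(\<Sum>z\<in>UNIV. mpow P i x z * mpow P 0 z y) = (\<Sum>z\<in>UNIV. if z = y then mpow P i x z else 0)"
    by (rule sum.cong) auto
  then show ?case by simp
next
  case (Suc k)
  have "mpow P (i + Suc k) x y = (\<Sum>w\<in>UNIV. mpow P (i+k) x w * P w y)" by simp
  also have "\<dots> = (\<Sum>w\<in>UNIV. \<Sum>z\<in>UNIV. mpow P i x z * mpow P k z w * P w y)"
    by (simp add: Suc sum_distrib_right)
  also have "\<dots> = (\<Sum>z\<in>UNIV. mpow P i x z * mpow P (Suc k) z y)"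
    by (subst sum.swap) (simp add: sum_distrib_left mult.assoc)
  finally show ?case .
qed

lemma mpow_Suc_left: "mpow P (Suc k) x y = (\<Sum>z\<in>UNIV. P x z * mpow P k z y)"
proof -
  have "mpow P (Suc k) x y = mpow P (1 + k) x y" by simp
  also have "\<dots> = (\<Sum>z\<in>UNIV. mpow P 1 x z * mpow P k z y)" by (rule mpow_add)
  also have "\<dots> = (\<Sum>z\<in>UNIV. P x z * mpow P k z y)"
  proof (rule sum.cong)
    fix z
    have "(\<Sum>w\<in>UNIV. mpow P 0 x w * P w z) = (\<Sum>w\<in>UNIV. if x = w then P w z else 0)"
      by (rule sum.cong) auto
    then have "mpow P 1 x z = P x z" by simp
    then show "mpow P 1 x z * mpow P k z y = P x z * mpow P k z y" by simp
  qed simp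
  finally show ?thesis .
qed

lemma mpow_telescope:
  assumes s: "stoch P"
  shows "\<bar>(\<Sum>i<n. mpow P (i + k) x y) - (\<Sum>i<n. mpow P i x y)\<bar> \<le> real k"
proof (induction k)
  case 0 then show ?case by simp
next
  case (Suc k)
  have "(\<Sum>i<n. mpow P (i + Suc k) x y) - (\<Sum>i<n. mpow P (i + k) x y)
        = (\<Sum>i<n. mpow P (Suc i + k) x y - mpow P (i + k) x y)"
    by (simp add: sum_subtractf)
  also have "\<dots> = mpow P (n + k) x y - mpow P (0 + k) x y"
    by (rule sum_lessThan_telescope[where f = "\<lambda>i. mpow P (i + k) x y"])
  finally have e: "(\<Sum>i<n. mpow P (i + Suc k) x y) - (\<Sum>i<n. mpow P (i + k) x y)
        = mpow P (n + k) x y - mpow P k x y" by simp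
  have "\<bar>mpow P (n + k) x y - mpow P k x y\<bar> \<le> 1"
    using mpow_nonneg[OF s] mpow_le1[OF s] by (smt (verit))
  then show ?case using Suc e by linarith
qed

definition cavg :: "('s::finite \<Rightarrow> 's \<Rightarrow> real) \<Rightarrow> nat \<Rightarrow> 's \<Rightarrow> 's \<Rightarrow> real" where
  "cavg P n x y = (\<Sum>k<n. mpow P k x y) / real n"

lemma cavg_nonneg: "stoch P \<Longrightarrow> 0 \<le> cavg P n x y"
  unfolding cavg_def by (auto intro!: divide_nonneg_nonneg sum_nonneg mpow_nonneg)

lemma cavg_sum1: "stoch P \<Longrightarrow> n > 0 \<Longrightarrow> (\<Sum>y\<in>UNIV. cavg P n x y) = 1"
proof -
  assume s: "stoch P" and n: "n > 0"
  have "(\<Sum>y\<in>UNIV. cavg P n x y) = (\<Sum>y\<in>UNIV. \<Sum>k<n. mpow P k x y) / real n"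
    unfolding cavg_def by (simp add: sum_divide_distrib)
  also have "(\<Sum>y\<in>UNIV. \<Sum>k<n. mpow P k x y) = (\<Sum>k<n. \<Sum>y\<in>UNIV. mpow P k x y)"
    by (rule sum.swap)
  also have "\<dots> = real n" using mpow_sum1[OF s] by simp
  finally show ?thesis using n by simp
qed

lemma cavg_le1: "stoch P \<Longrightarrow> cavg P n x y \<le> 1"
proof (cases "n = 0")
  case True then show ?thesis by (simp add: cavg_def)
next
  case False
  assume s: "stoch P"
  have "cavg P n x y \<le> (\<Sum>y\<in>UNIV. cavg P n x y)"
    by (rule member_le_sum) (auto simp: cavg_nonneg[OF s])
  then show ?thesis using cavg_sum1[OF s] False by simp
qed

lemma sum_mpow_Suc:
  "(\<Sum>k<n. mpow P (Suc k) x y) = (\<Sum>k<n. mpow P k x y) + mpow P n x y - mpow P 0 x y"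
  by (induction n) auto

lemma cavg_mulP:
  "(\<Sum>z\<in>UNIV. cavg P n x z * P z y) = cavg P n x y + (mpow P n x y - mpow P 0 x y) / real n"
proof -
  have "(\<Sum>z\<in>UNIV. cavg P n x z * P z y) = (\<Sum>z\<in>UNIV. \<Sum>k<n. mpow P k x z * P z y) / real n"
    unfolding cavg_def by (simp add: sum_divide_distrib sum_distrib_right)
  also have "(\<Sum>z\<in>UNIV. \<Sum>k<n. mpow P k x z * P z y) = (\<Sum>k<n. \<Sum>z\<in>UNIV. mpow P k x z * P z y)"
    by (rule sum.swap)
  also have "\<dots> = (\<Sum>k<n. mpow P (Suc k) x y)" by simp
  finally show ?thesis unfolding cavg_def sum_mpow_Suc by (simp add: diff_divide_distrib add_divide_distrib)
qed

lemma Pmul_cavg: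
  "(\<Sum>z\<in>UNIV. P x z * cavg P n z y) = cavg P n x y + (mpow P n x y - mpow P 0 x y) / real n"
proof -
  have "(\<Sum>z\<in>UNIV. P x z * cavg P n z y) = (\<Sum>z\<in>UNIV. \<Sum>k<n. P x z * mpow P k z y) / real n"
    unfolding cavg_def by (simp add: sum_divide_distrib sum_distrib_left)
  also have "(\<Sum>z\<in>UNIV. \<Sum>k<n. P x z * mpow P k z y) = (\<Sum>k<n. \<Sum>z\<in>UNIV. P x z * mpow P k z y)"
    by (rule sum.swap)
  also have "\<dots> = (\<Sum>k<n. mpow P (Suc k) x y)" by (simp only: mpow_Suc_left)
  finally show ?thesis unfolding cavg_def sum_mpow_Suc by (simp add: diff_divide_distrib add_divide_distrib)
qed

lemma cesaro_subseq:
  fixes P :: "'s::finite \<Rightarrow> 's \<Rightarrow> real"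
  assumes s: "stoch P"
  shows "\<exists>Q r. strict_mono r \<and> (\<forall>x y. (\<lambda>j. cavg P (r j) x y) \<longlonglongrightarrow> Q x y)"
proof -
  define F :: "nat \<Rightarrow> real^'s^'s" where "F n = (\<chi> x. \<chi> y. cavg P n x y)" for n
  have "norm (F n) \<le> real CARD('s) * real CARD('s)" for n
  proof -
    have "norm (F n) \<le> (\<Sum>x\<in>UNIV. norm (F n $ x))" by (simp add: norm_vec_def L2_set_le_sum)
    also have "\<dots> \<le> (\<Sum>x\<in>UNIV. \<Sum>y\<in>UNIV. \<bar>F n $ x $ y\<bar>)"
      by (intro sum_mono norm_le_l1_cart)
    also have "\<dots> \<le> (\<Sum>x\<in>(UNIV::'s set). \<Sum>y\<in>(UNIV::'s set). 1::real)"
      unfolding F_def using cavg_nonneg[OF s] cavg_le1[OF s]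
      by (intro sum_mono) auto
    finally show ?thesis by simp
  qed
  then have "bounded (range F)" unfolding bounded_iff by blast
  then obtain l r where r: "strict_mono r" and l: "(F \<circ> r) \<longlonglongrightarrow> l"
    using bounded_imp_convergent_subsequence by blast
  have "(\<lambda>j. cavg P (r j) x y) \<longlonglongrightarrow> l $ x $ y" for x y
  proof -
    have "(\<lambda>j. (F \<circ> r) j $ x $ y) \<longlonglongrightarrow> l $ x $ y"
      by (intro tendsto_vec_nth l)
    then show ?thesis by (simp add: F_def)
  qed
  then show ?thesis using r by (intro exI[of _ "\<lambda>x y. l $ x $ y"] exI[of _ r]) auto
qed

lemma err_to_0:
  assumes s: "stoch P" and r: "strict_mono r"
  shows "(\<lambda>j. (mpow P (r j) x y - mpow P 0 x y) / real (r j)) \<longlonglongrightarrow> 0"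
proof (rule Lim_null_comparison)
  have "((\<lambda>n. 1 / real n) \<circ> r) \<longlonglongrightarrow> 0"
    by (rule LIMSEQ_subseq_LIMSEQ[OF lim_1_over_n r])
  then show "(\<lambda>j. 1 / real (r j)) \<longlonglongrightarrow> 0" by (simp add: o_def)
  show "\<forall>\<^sub>F j in sequentially. norm ((mpow P (r j) x y - mpow P 0 x y) / real (r j)) \<le> 1 / real (r j)"
  proof (intro always_eventually allI)
    fix j
    have "\<bar>mpow P (r j) x y - mpow P 0 x y\<bar> \<le> 1"
      using mpow_nonneg[OF s, of "r j" x y] mpow_le1[OF s, of "r j" x y]
            mpow_nonneg[OF s, of 0 x y] mpow_le1[OF s, of 0 x y] by linarith
    then show "norm ((mpow P (r j) x y - mpow P 0 x y) / real (r j)) \<le> 1 / real (r j)"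
      by (simp add: abs_div_pos divide_right_mono)
  qed
qed

lemma QP_mpow:
  assumes "\<And>x y. (\<Sum>z\<in>UNIV. Q x z * P z y) = Q x y"
  shows "(\<Sum>z\<in>UNIV. Q x z * mpow P k z y) = Q x y"
proof (induction k arbitrary: y)
  case 0
  have "(\<Sum>z\<in>UNIV. Q x z * mpow P 0 z y) = (\<Sum>z\<in>UNIV. if z = y then Q x z else 0)"
    by (rule sum.cong) auto
  then show ?case by simp
next
  case (Suc k)
  have "(\<Sum>z\<in>UNIV. Q x z * mpow P (Suc k) z y) = (\<Sum>z\<in>UNIV. \<Sum>w\<in>UNIV. Q x z * mpow P k z w * P w y)"
    by (simp add: sum_distrib_left mult.assoc)
  also have "\<dots> = (\<Sum>w\<in>UNIV. \<Sum>z\<in>UNIV. Q x z * mpow P k z w * P w y)" by (rule sum.swap)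
  also have "\<dots> = (\<Sum>w\<in>UNIV. Q x w * P w y)"
    by (simp only: sum_distrib_right[symmetric] Suc)
  finally show ?case using assms by simp
qed

lemma mpow_PQ:
  assumes "\<And>x y. (\<Sum>z\<in>UNIV. P x z * Q z y) = Q x y"
  shows "(\<Sum>z\<in>UNIV. mpow P k x z * Q z y) = Q x y"
proof (induction k arbitrary: x)
  case 0
  have "(\<Sum>z\<in>UNIV. mpow P 0 x z * Q z y) = (\<Sum>z\<in>UNIV. if x = z then Q z y else 0)"
    by (rule sum.cong) auto
  then show ?case by simp
next
  case (Suc k)
  have "(\<Sum>z\<in>UNIV. mpow P (Suc k) x z * Q z y) = (\<Sum>z\<in>UNIV. \<Sum>w\<in>UNIV. P x w * mpow P k w z * Q z y)"
    by (simp only: mpow_Suc_left sum_distrib_right)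
  also have "\<dots> = (\<Sum>w\<in>UNIV. \<Sum>z\<in>UNIV. P x w * mpow P k w z * Q z y)" by (rule sum.swap)
  also have "\<dots> = (\<Sum>w\<in>UNIV. P x w * Q w y)"
    by (simp only: mult.assoc sum_distrib_left[symmetric] Suc)
  finally show ?case using assms by simp
qed

lemma cavg_Q:
  assumes "\<And>x y. (\<Sum>z\<in>UNIV. P x z * Q z y) = Q x y" and n: "n > 0"
  shows "(\<Sum>z\<in>UNIV. cavg P n x z * Q z y) = Q x y"
proof -
  have "(\<Sum>z\<in>UNIV. cavg P n x z * Q z y) = (\<Sum>z\<in>UNIV. \<Sum>k<n. mpow P k x z * Q z y) / real n"
    unfolding cavg_def by (simp add: sum_divide_distrib sum_distrib_right)
  also have "(\<Sum>z\<in>UNIV. \<Sum>k<n. mpow P k x z * Q z y) = (\<Sum>k<n. \<Sum>z\<in>UNIV. mpow P k x z * Q z y)"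
    by (rule sum.swap)
  also have "\<dots> = real n * Q x y"
  proof -
    have "\<And>k. (\<Sum>z\<in>UNIV. mpow P k x z * Q z y) = Q x y" by (rule mpow_PQ) (rule assms(1))
    then show ?thesis by simp
  qed
  finally show ?thesis using n by simp
qed

lemma cavg_cavg:
  "(\<Sum>z\<in>UNIV. cavg P n x z * cavg P m z y) = (\<Sum>k<m. \<Sum>i<n. mpow P (i + k) x y) / (real n * real m)"
proof -
  have "(\<Sum>z\<in>UNIV. cavg P n x z * cavg P m z y)
      = (\<Sum>z\<in>UNIV. \<Sum>i<n. \<Sum>k<m. mpow P i x z * mpow P k z y) / (real n * real m)"
  proof -
    have "cavg P n x z * cavg P m z y = (\<Sum>i<n. \<Sum>k<m. mpow P i x z * mpow P k z y) / (real n * real m)" for z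
      by (simp add: cavg_def sum_product)
    then show ?thesis by (simp add: sum_divide_distrib)
  qed
  also have "(\<Sum>z\<in>UNIV. \<Sum>i<n. \<Sum>k<m. mpow P i x z * mpow P k z y)
      = (\<Sum>i<n. \<Sum>z\<in>UNIV. \<Sum>k<m. mpow P i x z * mpow P k z y)" by (rule sum.swap)
  also have "\<dots> = (\<Sum>i<n. \<Sum>k<m. \<Sum>z\<in>UNIV. mpow P i x z * mpow P k z y)"
    by (intro sum.cong refl sum.swap)
  also have "\<dots> = (\<Sum>i<n. \<Sum>k<m. mpow P (i + k) x y)" by (simp add: mpow_add)
  also have "\<dots> = (\<Sum>k<m. \<Sum>i<n. mpow P (i + k) x y)" by (rule sum.swap)
  finally show ?thesis .
qed

lemma key_estimate:
  assumes s: "stoch P" and PQ: "\<And>x y. (\<Sum>z\<in>UNIV. P x z * Q z y) = Q x y"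
    and n: "n > 0" and m: "m > 0" and c: "\<And>z. \<bar>cavg P m z y - Q z y\<bar> \<le> c"
  shows "\<bar>cavg P n x y - Q x y\<bar> \<le> real m / real n + c"
proof -
  have d: "(\<Sum>z\<in>UNIV. cavg P n x z * mpow P 0 z y) = cavg P n x y"
  proof -
    have "(\<Sum>z\<in>UNIV. cavg P n x z * mpow P 0 z y) = (\<Sum>z\<in>UNIV. if z = y then cavg P n x z else 0)"
      by (rule sum.cong) auto
    then show ?thesis by simp
  qed
  define T1 where "T1 = cavg P n x y - (\<Sum>z\<in>UNIV. cavg P n x z * cavg P m z y)"
  define T2 where "T2 = (\<Sum>z\<in>UNIV. cavg P n x z * (cavg P m z y - Q z y))"
  have cq: "(\<Sum>z\<in>UNIV. cavg P n x z * Q z y) = Q x y"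
    by (rule cavg_Q[where P=P and Q=Q]) (use PQ n in auto)
  have split: "cavg P n x y - Q x y = T1 + T2"
    unfolding T1_def T2_def using cq
    by (simp add: sum_subtractf right_diff_distrib)
  have "cavg P n x y = (\<Sum>k<m. \<Sum>i<n. mpow P i x y) / (real n * real m)"
    using m by (simp add: cavg_def)
  then have T1e: "T1 = (\<Sum>k<m. (\<Sum>i<n. mpow P i x y) - (\<Sum>i<n. mpow P (i + k) x y)) / (real n * real m)"
    unfolding T1_def cavg_cavg by (simp add: sum_subtractf diff_divide_distrib)
  have "\<bar>\<Sum>k<m. (\<Sum>i<n. mpow P i x y) - (\<Sum>i<n. mpow P (i + k) x y)\<bar> \<le> (\<Sum>k<m. real m)"
  proof -
    have "\<bar>\<Sum>k<m. (\<Sum>i<n. mpow P i x y) - (\<Sum>i<n. mpow P (i + k) x y)\<bar>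
        \<le> (\<Sum>k<m. \<bar>(\<Sum>i<n. mpow P i x y) - (\<Sum>i<n. mpow P (i + k) x y)\<bar>)" by (rule sum_abs)
    also have "\<dots> \<le> (\<Sum>k<m. real m)"
    proof (rule sum_mono)
      fix k assume "k \<in> {..<m}"
      then show "\<bar>(\<Sum>i<n. mpow P i x y) - (\<Sum>i<n. mpow P (i + k) x y)\<bar> \<le> real m"
        using mpow_telescope[OF s, where n=n and k=k and x=x and y=y] by simp
    qed
    finally show ?thesis .
  qed
  then have Xb: "\<bar>\<Sum>k<m. (\<Sum>i<n. mpow P i x y) - (\<Sum>i<n. mpow P (i + k) x y)\<bar> \<le> real m * real m"
    by simp
  have "\<bar>T1\<bar> = \<bar>\<Sum>k<m. (\<Sum>i<n. mpow P i x y) - (\<Sum>i<n. mpow P (i + k) x y)\<bar> / (real n * real m)"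
    unfolding T1e by (simp add: abs_divide abs_mult)
  also have "\<dots> \<le> (real m * real m) / (real n * real m)"
    by (rule divide_right_mono[OF Xb]) simp
  also have "\<dots> = real m / real n" using m by simp
  finally have T1b: "\<bar>T1\<bar> \<le> real m / real n" .
  have "\<bar>T2\<bar> \<le> (\<Sum>z\<in>UNIV. \<bar>cavg P n x z * (cavg P m z y - Q z y)\<bar>)"
    unfolding T2_def by (rule sum_abs)
  also have "\<dots> \<le> (\<Sum>z\<in>UNIV. cavg P n x z * c)"
    by (intro sum_mono) (simp add: abs_mult cavg_nonneg[OF s] c mult_left_mono)
  also have "\<dots> = (\<Sum>z\<in>UNIV. cavg P n x z) * c" by (rule sum_distrib_right[symmetric])
  also have "\<dots> = c" using cavg_sum1[OF s n] by simp
  finally have "\<bar>T2\<bar> \<le> c" .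
  then show ?thesis using split T1b by linarith
qed

lemma cesaro_conv:
  fixes P :: "'s::finite \<Rightarrow> 's \<Rightarrow> real"
  assumes s: "stoch P"
  shows "\<exists>Q. (\<forall>x y. (\<lambda>n. cavg P n x y) \<longlonglongrightarrow> Q x y) \<and> (\<forall>x y. 0 \<le> Q x y)
           \<and> (\<forall>x. (\<Sum>y\<in>UNIV. Q x y) = 1) \<and> (\<forall>x y. (\<Sum>z\<in>UNIV. Q x z * P z y) = Q x y)"
proof -
  obtain Q r where r: "strict_mono r" and lim: "\<And>x y. (\<lambda>j. cavg P (r j) x y) \<longlonglongrightarrow> Q x y"
    using cesaro_subseq[OF s] by blast
  have rpos: "\<forall>\<^sub>F j in sequentially. r j > 0"
  proof -
    have "\<forall>\<^sub>F j in sequentially. j \<ge> 1" by (rule eventually_ge_at_top)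
    then show ?thesis by eventually_elim (use seq_suble[OF r] in \<open>auto intro: less_le_trans\<close>)
  qed
  have QP: "(\<Sum>z\<in>UNIV. Q x z * P z y) = Q x y" for x y
  proof -
    have "(\<lambda>j. \<Sum>z\<in>UNIV. cavg P (r j) x z * P z y) \<longlonglongrightarrow> (\<Sum>z\<in>UNIV. Q x z * P z y)"
      by (intro tendsto_sum tendsto_mult_right lim)
    moreover have "(\<lambda>j. \<Sum>z\<in>UNIV. cavg P (r j) x z * P z y) \<longlonglongrightarrow> Q x y + 0"
      unfolding cavg_mulP by (intro tendsto_add lim err_to_0[OF s r])
    ultimately show ?thesis using LIMSEQ_unique by fastforce
  qed
  have PQ: "(\<Sum>z\<in>UNIV. P x z * Q z y) = Q x y" for x y
  proof -
    have "(\<lambda>j. \<Sum>z\<in>UNIV. P x z * cavg P (r j) z y) \<longlonglongrightarrow> (\<Sum>z\<in>UNIV. P x z * Q z y)"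
      by (intro tendsto_sum tendsto_mult_left lim)
    moreover have "(\<lambda>j. \<Sum>z\<in>UNIV. P x z * cavg P (r j) z y) \<longlonglongrightarrow> Q x y + 0"
      unfolding Pmul_cavg by (intro tendsto_add lim err_to_0[OF s r])
    ultimately show ?thesis using LIMSEQ_unique by fastforce
  qed
  have nonneg: "0 \<le> Q x y" for x y
    by (rule LIMSEQ_le_const[OF lim]) (auto intro: cavg_nonneg[OF s])
  have sum1: "(\<Sum>y\<in>UNIV. Q x y) = 1" for x
  proof -
    have "(\<lambda>j. \<Sum>y\<in>UNIV. cavg P (r j) x y) \<longlonglongrightarrow> (\<Sum>y\<in>UNIV. Q x y)"
      by (intro tendsto_sum lim)
    moreover have "\<forall>\<^sub>F j in sequentially. (\<Sum>y\<in>UNIV. cavg P (r j) x y) = 1"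
      using rpos by eventually_elim (rule cavg_sum1[OF s])
    ultimately have "(\<lambda>j. 1::real) \<longlonglongrightarrow> (\<Sum>y\<in>UNIV. Q x y)"
      by (rule Lim_transform_eventually)
    then show ?thesis using LIMSEQ_const_iff by metis
  qed
  have conv: "(\<lambda>n. cavg P n x y) \<longlonglongrightarrow> Q x y" for x y
  proof (rule LIMSEQ_I)
    fix e :: real assume e: "0 < e"
    have "\<forall>\<^sub>F j in sequentially. \<forall>z. \<bar>cavg P (r j) z y - Q z y\<bar> < e / 2"
    proof (rule eventually_all_finite)
      fix z
      have "\<forall>\<^sub>F j in sequentially. dist (cavg P (r j) z y) (Q z y) < e / 2"
        using lim[of z y] e unfolding tendsto_iff by (meson half_gt_zero)
      then show "\<forall>\<^sub>F j in sequentially. \<bar>cavg P (r j) z y - Q z y\<bar> < e / 2"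
        by (simp add: dist_real_def)
    qed
    then have "\<forall>\<^sub>F j in sequentially. r j > 0 \<and> (\<forall>z. \<bar>cavg P (r j) z y - Q z y\<bar> < e / 2)"
      using rpos by eventually_elim auto
    then obtain N0 where N0: "\<And>j. j \<ge> N0 \<Longrightarrow> r j > 0 \<and> (\<forall>z. \<bar>cavg P (r j) z y - Q z y\<bar> < e / 2)"
      unfolding eventually_sequentially by blast
    define j where "j = N0"
    have j: "r j > 0" "\<And>z. \<bar>cavg P (r j) z y - Q z y\<bar> \<le> e / 2"
      using N0[of j] unfolding j_def by (auto simp: less_imp_le)
    define m where "m = r j"
    obtain N :: nat where N: "real N > 2 * real m / e" using reals_Archimedean2 by blast
    show "\<exists>no. \<forall>n\<ge>no. norm (cavg P n x y - Q x y) < e"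
    proof (intro exI allI impI)
      fix n assume n: "n \<ge> Suc N"
      then have npos: "n > 0" by simp
      have "\<bar>cavg P n x y - Q x y\<bar> \<le> real m / real n + e / 2"
        by (rule key_estimate[OF s PQ npos]) (use j m_def in auto)
      moreover have "real m / real n < e / 2"
      proof -
        have "real n > 2 * real m / e" using N n by linarith
        then have "real n * e > 2 * real m" using e by (simp add: field_simps)
        then show ?thesis using npos e by (simp add: field_simps)
      qed
      ultimately show "norm (cavg P n x y - Q x y) < e" unfolding real_norm_def by linarith
    qed
  qed
  show ?thesis using conv nonneg sum1 QP by blast
qed

lemma state_dist_mpow:
  "state_dist p pol s1 k x = mpow (\<lambda>x y. p x (pol x) y) k s1 x"
  by (induction k arbitrary: x) auto

lemma stoch_pol: "is_mdp r p \<Longrightarrow> stoch (\<lambda>x y. p x (pol x) y)"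
  unfolding is_mdp_def stoch_def by auto

lemma avg_reward_stat:
  assumes "is_mdp r p"
  shows "\<exists>q. (\<forall>x. 0 \<le> q x) \<and> (\<Sum>x\<in>UNIV. q x) = 1 \<and> (\<forall>y. (\<Sum>x\<in>UNIV. q x * p x (pol x) y) = q y)
           \<and> avg_reward r p s1 pol = (\<Sum>x\<in>UNIV. q x * r x (pol x))"
proof -
  define P where "P = (\<lambda>x y. p x (pol x) y)"
  have s: "stoch P" unfolding P_def by (rule stoch_pol[OF assms])
  obtain Q where Q: "\<And>x y. (\<lambda>n. cavg P n x y) \<longlonglongrightarrow> Q x y" "\<And>x y. 0 \<le> Q x y"
     "\<And>x. (\<Sum>y\<in>UNIV. Q x y) = 1" "\<And>x y. (\<Sum>z\<in>UNIV. Q x z * P z y) = Q x y"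
    using cesaro_conv[OF s] by blast
  have eq: "(\<Sum>k<n. \<Sum>x\<in>UNIV. state_dist p pol s1 k x * r x (pol x)) / real n
        = (\<Sum>x\<in>UNIV. cavg P n s1 x * r x (pol x))" for n
  proof -
    have "(\<Sum>k<n. \<Sum>x\<in>UNIV. state_dist p pol s1 k x * r x (pol x))
        = (\<Sum>x\<in>UNIV. \<Sum>k<n. mpow P k s1 x * r x (pol x))"
      unfolding state_dist_mpow P_def by (rule sum.swap)
    then show ?thesis unfolding cavg_def
      by (simp add: sum_divide_distrib sum_distrib_right)
  qed
  have "(\<lambda>n. (\<Sum>k<n. \<Sum>x\<in>UNIV. state_dist p pol s1 k x * r x (pol x)) / real n)
        \<longlonglongrightarrow> (\<Sum>x\<in>UNIV. Q s1 x * r x (pol x))"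
    unfolding eq by (intro tendsto_sum tendsto_mult_right Q(1))
  then have "avg_reward r p s1 pol = (\<Sum>x\<in>UNIV. Q s1 x * r x (pol x))"
    unfolding avg_reward_def by (rule limI)
  then show ?thesis using Q(2,3,4) unfolding P_def by blast
qed

lemma Max_range_ge: "f a \<le> Max (range (f::'a::finite \<Rightarrow> real))"
  by (rule Max_ge) auto

lemma Max_range_attained: "\<exists>a. Max (range (f::'a::finite \<Rightarrow> real)) = f a"
proof -
  have "Max (range f) \<in> range f" by (rule Max_in) auto
  then show ?thesis by (metis imageE)
qed

lemma Max_range_mono: "(\<And>a. f a \<le> g a) \<Longrightarrow> Max (range f) \<le> Max (range (g :: 'a::finite \<Rightarrow> real))"
proof -
  assume fg: "\<And>a. f a \<le> g a"
  obtain a where "Max (range f) = f a" using Max_range_attained by blast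
  then show ?thesis using fg[of a] Max_range_ge[of g a] by linarith
qed

lemma Max_range_le: "(\<And>a. f a \<le> c) \<Longrightarrow> Max (range (f :: 'a::finite \<Rightarrow> real)) \<le> c"
  using Max_range_attained by metis

lemma stoch_avg_le:
  fixes v :: "'s::finite \<Rightarrow> real"
  assumes "\<And>y. 0 \<le> q y" "(\<Sum>y\<in>UNIV. q y) = 1" "\<And>y. v y \<le> B"
  shows "(\<Sum>y\<in>UNIV. q y * v y) \<le> B"
proof -
  have "(\<Sum>y\<in>UNIV. q y * v y) \<le> (\<Sum>y\<in>UNIV. q y * B)"
    by (intro sum_mono mult_left_mono assms)
  also have "\<dots> = B" using assms(2) by (simp add: sum_distrib_right[symmetric])
  finally show ?thesis .
qed

lemma stoch_avg_ge:
  fixes v :: "'s::finite \<Rightarrow> real"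
  assumes "\<And>y. 0 \<le> q y" "(\<Sum>y\<in>UNIV. q y) = 1" "\<And>y. B \<le> v y"
  shows "B \<le> (\<Sum>y\<in>UNIV. q y * v y)"
proof -
  have "(\<Sum>y\<in>UNIV. q y * B) \<le> (\<Sum>y\<in>UNIV. q y * v y)"
    by (intro sum_mono mult_left_mono assms)
  moreover have "(\<Sum>y\<in>UNIV. q y * B) = B" using assms(2) by (simp add: sum_distrib_right[symmetric])
  ultimately show ?thesis by simp
qed

lemma disc_opt:
  fixes r :: "'s::finite \<Rightarrow> 'a::finite \<Rightarrow> real" and p :: "'s \<Rightarrow> 'a \<Rightarrow> 's \<Rightarrow> real"
  assumes mdp: "is_mdp r p" and g0: "0 \<le> \<gamma>" and g1: "\<gamma> < 1"
  shows "\<exists>V pol. (\<forall>x. 0 \<le> V x \<and> V x \<le> 1 / (1 - \<gamma>))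
           \<and> (\<forall>x a. r x a + \<gamma> * (\<Sum>y\<in>UNIV. p x a y * V y) \<le> V x)
           \<and> (\<forall>x. V x \<le> r x (pol x) + \<gamma> * (\<Sum>y\<in>UNIV. p x (pol x) y * V y))"
proof -
  have r01: "0 \<le> r x a" "r x a \<le> 1" for x a using mdp unfolding is_mdp_def by auto
  have p0: "0 \<le> p x a y" for x a y using mdp unfolding is_mdp_def by auto
  have p1: "(\<Sum>y\<in>UNIV. p x a y) = 1" for x a using mdp unfolding is_mdp_def by auto
  define Tm where "Tm v x = Max (range (\<lambda>a. r x a + \<gamma> * (\<Sum>y\<in>UNIV. p x a y * v y)))"
    for v :: "'s \<Rightarrow> real" and x
  have Tm_mono: "Tm u x \<le> Tm w x" if "\<And>y. u y \<le> w y" for u w x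
    unfolding Tm_def
  proof (rule Max_range_mono)
    fix a
    have "(\<Sum>y\<in>UNIV. p x a y * u y) \<le> (\<Sum>y\<in>UNIV. p x a y * w y)"
      by (intro sum_mono mult_left_mono that p0)
    then show "r x a + \<gamma> * (\<Sum>y\<in>UNIV. p x a y * u y) \<le> r x a + \<gamma> * (\<Sum>y\<in>UNIV. p x a y * w y)"
      using g0 by (simp add: mult_left_mono)
  qed
  define B where "B = 1 / (1 - \<gamma>)"
  have B: "1 + \<gamma> * B = B" using g1 unfolding B_def by (simp add: field_simps)
  have Bpos: "0 \<le> B" using g1 unfolding B_def by simp
  have Tm_bound: "Tm v x \<le> B" if "\<And>y. v y \<le> B" for v x
    unfolding Tm_def
  proof (rule Max_range_le)
    fix a
    have "(\<Sum>y\<in>UNIV. p x a y * v y) \<le> B"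
      by (rule stoch_avg_le) (use p0 p1 that in auto)
    then have "\<gamma> * (\<Sum>y\<in>UNIV. p x a y * v y) \<le> \<gamma> * B" using g0 by (rule mult_left_mono)
    then show "r x a + \<gamma> * (\<Sum>y\<in>UNIV. p x a y * v y) \<le> B" using r01[of x a] B by linarith
  qed
  define vi where "vi n = (Tm ^^ n) (\<lambda>_. 0)" for n
  have vi0: "vi 0 = (\<lambda>_. 0)" and viS: "vi (Suc n) = Tm (vi n)" for n
    unfolding vi_def by auto
  have vi_inc: "vi n x \<le> vi (Suc n) x" for n x
  proof (induction n arbitrary: x)
    case 0
    have "r x undefined + \<gamma> * (\<Sum>y\<in>UNIV. p x undefined y * vi 0 y) \<le> Tm (vi 0) x"
      unfolding Tm_def by (rule Max_range_ge)
    then show ?case using r01[of x undefined] by (simp add: vi0 viS)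
  next
    case (Suc n)
    then show ?case unfolding viS[of "Suc n"] viS[of n] by (intro Tm_mono) (simp add: viS)
  qed
  have vi_le: "vi n x \<le> B" for n x
    by (induction n arbitrary: x) (auto simp: vi0 viS Bpos intro: Tm_bound)
  have vi_ge: "0 \<le> vi n x" for n x
  proof (induction n arbitrary: x)
    case 0 then show ?case by (simp add: vi0)
  next
    case (Suc n) then show ?case using vi_inc[of n x] Suc[of x] by linarith
  qed
  define V where "V x = (SUP n. vi n x)" for x
  have inc: "incseq (\<lambda>n. vi n x)" for x by (rule incseq_SucI) (rule vi_inc)
  have bdd: "bdd_above (range (\<lambda>n. vi n x))" for x
    by (rule bdd_aboveI[where M=B]) (use vi_le in auto)
  have lim: "(\<lambda>n. vi n x) \<longlonglongrightarrow> V x" for x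
    unfolding V_def by (rule LIMSEQ_incseq_SUP[OF bdd inc])
  have vi_V: "vi n x \<le> V x" for n x
    unfolding V_def by (rule cSUP_upper[OF _ bdd]) simp
  have V0: "0 \<le> V x" for x using vi_ge[of 0 x] vi_V[of 0 x] by linarith
  have VB: "V x \<le> B" for x
    unfolding V_def by (rule cSUP_least) (auto intro: vi_le)
  have ineq1: "r x a + \<gamma> * (\<Sum>y\<in>UNIV. p x a y * V y) \<le> V x" for x a
  proof (rule LIMSEQ_le_const2)
    show "(\<lambda>n. r x a + \<gamma> * (\<Sum>y\<in>UNIV. p x a y * vi n y)) \<longlonglongrightarrow> r x a + \<gamma> * (\<Sum>y\<in>UNIV. p x a y * V y)"
      by (intro tendsto_intros lim)
    show "\<exists>N. \<forall>n\<ge>N. r x a + \<gamma> * (\<Sum>y\<in>UNIV. p x a y * vi n y) \<le> V x"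
    proof (intro exI allI impI)
      fix n :: nat
      have "r x a + \<gamma> * (\<Sum>y\<in>UNIV. p x a y * vi n y) \<le> Tm (vi n) x"
        unfolding Tm_def by (rule Max_range_ge)
      also have "\<dots> = vi (Suc n) x" by (simp add: viS)
      also have "\<dots> \<le> V x" by (rule vi_V)
      finally show "r x a + \<gamma> * (\<Sum>y\<in>UNIV. p x a y * vi n y) \<le> V x" .
    qed
  qed
  have ineq2: "V x \<le> Tm V x" for x
  proof (rule LIMSEQ_le_const2)
    show "(\<lambda>n. vi (Suc n) x) \<longlonglongrightarrow> V x" using lim by (rule LIMSEQ_Suc)
    show "\<exists>N. \<forall>n\<ge>N. vi (Suc n) x \<le> Tm V x"
      by (intro exI allI impI) (unfold viS, rule Tm_mono, rule vi_V)
  qed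
  define pol where "pol x = (SOME a. Tm V x = r x a + \<gamma> * (\<Sum>y\<in>UNIV. p x a y * V y))" for x
  have pol: "Tm V x = r x (pol x) + \<gamma> * (\<Sum>y\<in>UNIV. p x (pol x) y * V y)" for x
    unfolding pol_def Tm_def by (rule someI_ex) (rule Max_range_attained)
  show ?thesis
  proof (intro exI[of _ V] exI[of _ pol] conjI allI)
    fix x show "0 \<le> V x" by (rule V0)
  next
    fix x show "V x \<le> 1 / (1 - \<gamma>)" using VB[of x] unfolding B_def .
  next
    fix x a show "r x a + \<gamma> * (\<Sum>y\<in>UNIV. p x a y * V y) \<le> V x" by (rule ineq1)
  next
    fix x show "V x \<le> r x (pol x) + \<gamma> * (\<Sum>y\<in>UNIV. p x (pol x) y * V y)"
      using ineq2[of x] pol[of x] by simp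
  qed
qed

lemma surv_nonneg:
  assumes "\<And>x a y. 0 \<le> p x a y"
  shows "0 \<le> survive p pol b a k x"
  by (induction k arbitrary: x) (auto intro!: sum_nonneg mult_nonneg_nonneg assms)

lemma sum_if_minus:
  fixes W :: "'s::finite \<Rightarrow> real"
  shows "(\<Sum>y\<in>UNIV. if y = a then 0 else W y) = (\<Sum>y\<in>UNIV. W y) - W a"
proof -
  have "(\<Sum>y\<in>UNIV. if y = a then 0 else W y) = (\<Sum>y\<in>UNIV. W y - (if y = a then W y else 0))"
    by (rule sum.cong) auto
  also have "\<dots> = (\<Sum>y\<in>UNIV. W y) - W a" by (simp add: sum_subtractf)
  finally show ?thesis .
qed

lemma span_hit:
  fixes p :: "'s::finite \<Rightarrow> 'a::finite \<Rightarrow> 's \<Rightarrow> real" and V :: "'s \<Rightarrow> real"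
  assumes mdp: "is_mdp r p" and g0: "0 \<le> \<gamma>" and g1: "\<gamma> < 1"
    and V0: "\<And>x. 0 \<le> V x" and VB: "\<And>x. V x \<le> 1 / (1 - \<gamma>)"
    and super: "\<And>x a. \<gamma> * (\<Sum>y\<in>UNIV. p x a y * V y) \<le> V x"
    and ab: "a \<noteq> b" and E: "exp_hit_time p pol b a \<le> ennreal E" and E0: "0 \<le> E"
  shows "V a - V b \<le> E"
proof -
  have p0: "0 \<le> p x c y" for x c y using mdp unfolding is_mdp_def by auto
  have p1: "(\<Sum>y\<in>UNIV. p x c y) = 1" for x c using mdp unfolding is_mdp_def by auto
  define sv where "sv k x = survive p pol b a k x" for k x
  define S where "S k = (\<Sum>x\<in>UNIV. sv k x)" for k
  define R where "R k = (\<Sum>x\<in>UNIV. sv k x * V x)" for k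
  define W where "W k y = (\<Sum>x\<in>UNIV. sv k x * p x (pol x) y)" for k y
  have sv0: "0 \<le> sv k x" for k x unfolding sv_def by (rule surv_nonneg[OF p0])
  have W0: "0 \<le> W k y" for k y unfolding W_def by (intro sum_nonneg mult_nonneg_nonneg sv0 p0)
  have svS: "sv (Suc k) y = (if y = a then 0 else W k y)" for k y
    unfolding sv_def W_def by simp
  have sumW: "(\<Sum>y\<in>UNIV. W k y) = S k" for k
  proof -
    have "(\<Sum>y\<in>UNIV. W k y) = (\<Sum>x\<in>UNIV. \<Sum>y\<in>UNIV. sv k x * p x (pol x) y)"
      unfolding W_def by (rule sum.swap)
    also have "\<dots> = (\<Sum>x\<in>UNIV. sv k x * (\<Sum>y\<in>UNIV. p x (pol x) y))"
      by (simp add: sum_distrib_left)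
    also have "\<dots> = S k" unfolding S_def by (simp add: p1)
    finally show ?thesis .
  qed
  have SS: "S (Suc k) = S k - W k a" for k
  proof -
    have "S (Suc k) = (\<Sum>y\<in>UNIV. if y = a then 0 else W k y)"
      unfolding S_def by (rule sum.cong) (auto simp: svS)
    also have "\<dots> = (\<Sum>y\<in>UNIV. W k y) - W k a" by (rule sum_if_minus)
    finally show ?thesis using sumW[of k] by simp
  qed
  have RS: "R (Suc k) = (\<Sum>y\<in>UNIV. W k y * V y) - W k a * V a" for k
  proof -
    have "R (Suc k) = (\<Sum>y\<in>UNIV. if y = a then 0 else W k y * V y)"
      unfolding R_def svS by (rule sum.cong) auto
    then show ?thesis by (simp add: sum_if_minus)
  qed
  have Rstep: "\<gamma> * (\<Sum>y\<in>UNIV. W k y * V y) \<le> R k" for k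
  proof -
    have "\<gamma> * (\<Sum>y\<in>UNIV. W k y * V y) = (\<Sum>x\<in>UNIV. sv k x * (\<gamma> * (\<Sum>y\<in>UNIV. p x (pol x) y * V y)))"
    proof -
      have "(\<Sum>y\<in>UNIV. W k y * V y) = (\<Sum>y\<in>UNIV. \<Sum>x\<in>UNIV. sv k x * p x (pol x) y * V y)"
        unfolding W_def by (simp add: sum_distrib_right)
      also have "\<dots> = (\<Sum>x\<in>UNIV. \<Sum>y\<in>UNIV. sv k x * p x (pol x) y * V y)" by (rule sum.swap)
      also have "\<dots> = (\<Sum>x\<in>UNIV. sv k x * (\<Sum>y\<in>UNIV. p x (pol x) y * V y))"
        by (simp add: sum_distrib_left mult.assoc)
      finally show ?thesis by (simp add: sum_distrib_left mult.left_commute)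
    qed
    also have "\<dots> \<le> R k" unfolding R_def
      by (intro sum_mono mult_left_mono super sv0)
    finally show ?thesis .
  qed
  have S0: "S 0 = 1"
  proof -
    have "S 0 = (\<Sum>x\<in>UNIV. if x = b then 1 else 0)"
      unfolding S_def sv_def using ab by (intro sum.cong) auto
    then show ?thesis by simp
  qed
  have R0: "R 0 = V b"
  proof -
    have "R 0 = (\<Sum>x\<in>UNIV. if x = b then V x else 0)"
      unfolding R_def sv_def using ab by (intro sum.cong) auto
    then show ?thesis by simp
  qed
  have Sle1: "S k \<le> 1" for k
  proof (induction k)
    case 0 then show ?case by (simp add: S0)
  next
    case (Suc k) then show ?case using SS[of k] W0[of k a] by linarith
  qed
  have S_nonneg: "0 \<le> S k" for k unfolding S_def by (intro sum_nonneg sv0)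
  have R_nonneg: "0 \<le> R k" for k unfolding R_def by (intro sum_nonneg mult_nonneg_nonneg sv0 V0)
  have inv: "V a * (1 - (1 - \<gamma>) * (\<Sum>k<n. \<gamma> ^ k * S k) - \<gamma> ^ n * S n) + \<gamma> ^ n * R n \<le> V b" for n
  proof (induction n)
    case 0 then show ?case by (simp add: S0 R0)
  next
    case (Suc n)
    have "\<gamma> ^ n * (\<gamma> * (\<Sum>y\<in>UNIV. W n y * V y)) \<le> \<gamma> ^ n * R n"
      by (intro mult_left_mono Rstep) (simp add: g0)
    moreover have "(\<Sum>y\<in>UNIV. W n y * V y) = R (Suc n) + (S n - S (Suc n)) * V a"
      using RS[of n] SS[of n] by simp
    moreover have "V a * (1 - (1 - \<gamma>) * (\<Sum>k<Suc n. \<gamma> ^ k * S k) - \<gamma> ^ Suc n * S (Suc n)) + \<gamma> ^ Suc n * R (Suc n)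
        = V a * (1 - (1 - \<gamma>) * (\<Sum>k<n. \<gamma> ^ k * S k) - \<gamma> ^ n * S n)
          + \<gamma> ^ n * (\<gamma> * (R (Suc n) + (S n - S (Suc n)) * V a))"
      by (simp add: algebra_simps)
    ultimately show ?case using Suc by simp
  qed
  have psum: "(\<Sum>k<n. S k) \<le> E" for n
  proof -
    have "ennreal (\<Sum>k<n. S k) = (\<Sum>k<n. ennreal (S k))"
      by (rule sum_ennreal[symmetric]) (rule S_nonneg)
    also have "\<dots> \<le> (\<Sum>k. ennreal (S k))"
      by (rule sum_le_suminf) auto
    also have "\<dots> = exp_hit_time p pol b a"
      unfolding exp_hit_time_def S_def sv_def ..
    also have "\<dots> \<le> ennreal E" by (rule E)
    finally show ?thesis using E0 by simp
  qed
  have bound: "V a - V b \<le> E + \<gamma> ^ n / (1 - \<gamma>)" for n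
  proof -
    have c1: "(\<Sum>k<n. \<gamma> ^ k * S k) \<le> (\<Sum>k<n. S k)"
      by (intro sum_mono mult_left_le_one_le S_nonneg) (use g0 g1 in \<open>auto intro: power_le_one\<close>)
    have Va1: "V a * (1 - \<gamma>) \<le> 1" using VB[of a] g1 by (simp add: field_simps)
    have "V a - V b \<le> V a * ((1 - \<gamma>) * (\<Sum>k<n. \<gamma> ^ k * S k)) + V a * (\<gamma> ^ n * S n)"
    proof -
      have Z: "0 \<le> \<gamma> ^ n * R n" using R_nonneg[of n] g0 by simp
      have eq: "V a * (1 - (1 - \<gamma>) * (\<Sum>k<n. \<gamma> ^ k * S k) - \<gamma> ^ n * S n)
          = V a - V a * ((1 - \<gamma>) * (\<Sum>k<n. \<gamma> ^ k * S k)) - V a * (\<gamma> ^ n * S n)"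
        by (simp add: algebra_simps)
      show ?thesis using inv[of n] Z eq by linarith
    qed
    also have "V a * ((1 - \<gamma>) * (\<Sum>k<n. \<gamma> ^ k * S k)) \<le> (\<Sum>k<n. S k)"
    proof -
      have "V a * ((1 - \<gamma>) * (\<Sum>k<n. \<gamma> ^ k * S k)) = (V a * (1 - \<gamma>)) * (\<Sum>k<n. \<gamma> ^ k * S k)"
        by simp
      also have "\<dots> \<le> 1 * (\<Sum>k<n. \<gamma> ^ k * S k)"
        by (intro mult_right_mono Va1 sum_nonneg mult_nonneg_nonneg S_nonneg) (simp add: g0)
      finally show ?thesis using c1 by simp
    qed
    also have "V a * (\<gamma> ^ n * S n) \<le> 1 / (1 - \<gamma>) * (\<gamma> ^ n * 1)"
      by (intro mult_mono VB mult_left_mono Sle1 mult_nonneg_nonneg S_nonneg) (use g0 g1 in auto)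
    finally show ?thesis using psum[of n] by simp
  qed
  have "(\<lambda>n. E + \<gamma> ^ n / (1 - \<gamma>)) \<longlonglongrightarrow> E + 0 / (1 - \<gamma>)"
    by (intro tendsto_intros LIMSEQ_power_zero) (use g0 g1 in auto)
  then have "(\<lambda>n. E + \<gamma> ^ n / (1 - \<gamma>)) \<longlonglongrightarrow> E" by simp
  then show ?thesis
    by (rule LIMSEQ_le_const) (use bound in auto)
qed

lemma span_diam:
  fixes p :: "'s::finite \<Rightarrow> 'a::finite \<Rightarrow> 's \<Rightarrow> real" and V :: "'s \<Rightarrow> real"
  assumes mdp: "is_mdp r p" and g0: "0 \<le> \<gamma>" and g1: "\<gamma> < 1"
    and V0: "\<And>x. 0 \<le> V x" and VB: "\<And>x. V x \<le> 1 / (1 - \<gamma>)"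
    and super: "\<And>x a. \<gamma> * (\<Sum>y\<in>UNIV. p x a y * V y) \<le> V x"
    and diam: "diameter p \<le> ennreal D" and D0: "0 \<le> D"
  shows "V a - V b \<le> D"
proof (cases "a = b")
  case True then show ?thesis using D0 by simp
next
  case False
  have "(INF pol. exp_hit_time p pol b a) \<le> diameter p"
    unfolding diameter_def
    by (rule SUP_upper2[where i="(b, a)"]) (use False in auto)
  also have "\<dots> \<le> ennreal D" by (rule diam)
  finally have inf: "(INF pol. exp_hit_time p pol b a) \<le> ennreal D" .
  show ?thesis
  proof (rule field_le_epsilon)
    fix e :: real assume e: "0 < e"
    have "ennreal D < ennreal (D + e)" using e D0 by (simp add: ennreal_less_iff)
    with inf have "(INF pol. exp_hit_time p pol b a) < ennreal (D + e)" by (rule le_less_trans)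
    then obtain pol where "exp_hit_time p pol b a < ennreal (D + e)"
      unfolding INF_less_iff by blast
    then have "exp_hit_time p pol b a \<le> ennreal (D + e)" by simp
    then show "V a - V b \<le> D + e"
      by (rule span_hit[OF mdp g0 g1 V0 VB super False, where pol=pol and E="D+e"]) (use e D0 in auto)
  qed
qed

lemma stat_swap:
  fixes q :: "'s::finite \<Rightarrow> real"
  assumes "\<And>y. (\<Sum>x\<in>UNIV. q x * P x y) = q y"
  shows "(\<Sum>x\<in>UNIV. q x * (\<Sum>y\<in>UNIV. P x y * f y)) = (\<Sum>y\<in>UNIV. q y * f y)"
proof -
  have "(\<Sum>x\<in>UNIV. q x * (\<Sum>y\<in>UNIV. P x y * f y)) = (\<Sum>x\<in>UNIV. \<Sum>y\<in>UNIV. q x * P x y * f y)"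
    by (simp add: sum_distrib_left mult.assoc)
  also have "\<dots> = (\<Sum>y\<in>UNIV. \<Sum>x\<in>UNIV. q x * P x y * f y)" by (rule sum.swap)
  also have "\<dots> = (\<Sum>y\<in>UNIV. (\<Sum>x\<in>UNIV. q x * P x y) * f y)" by (simp add: sum_distrib_right)
  also have "\<dots> = (\<Sum>y\<in>UNIV. q y * f y)" by (simp add: assms)
  finally show ?thesis .
qed

lemma dp_bound:
  fixes V :: "'s::finite \<Rightarrow> real"
  assumes s: "(\<Sum>y\<in>UNIV. q2 y) = (\<Sum>y\<in>UNIV. q1 y)"
    and span: "\<And>y z. V y - V z \<le> D" and D0: "0 \<le> D"
  shows "(\<Sum>y\<in>UNIV. (q2 y - q1 y) * V y) \<le> D * (\<Sum>y\<in>UNIV. \<bar>q2 y - q1 y\<bar>)"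
proof -
  define c where "c = Min (range V)"
  have cle: "c \<le> V y" for y unfolding c_def by (rule Min_le) auto
  have "Min (range V) \<in> range V" by (rule Min_in) auto
  then obtain y0 where y0: "c = V y0" unfolding c_def by (metis imageE)
  have "(\<Sum>y\<in>UNIV. (q2 y - q1 y) * V y) = (\<Sum>y\<in>UNIV. (q2 y - q1 y) * (V y - c)) + (\<Sum>y\<in>UNIV. (q2 y - q1 y)) * c"
  proof -
    have "(\<Sum>y\<in>UNIV. (q2 y - q1 y) * V y) = (\<Sum>y\<in>UNIV. (q2 y - q1 y) * (V y - c) + (q2 y - q1 y) * c)"
      by (rule sum.cong) (auto simp: algebra_simps)
    also have "\<dots> = (\<Sum>y\<in>UNIV. (q2 y - q1 y) * (V y - c)) + (\<Sum>y\<in>UNIV. (q2 y - q1 y) * c)"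
      by (rule sum.distrib)
    also have "(\<Sum>y\<in>UNIV. (q2 y - q1 y) * c) = (\<Sum>y\<in>UNIV. (q2 y - q1 y)) * c"
      by (rule sum_distrib_right[symmetric])
    finally show ?thesis .
  qed
  also have "(\<Sum>y\<in>UNIV. (q2 y - q1 y)) = 0" using s by (simp add: sum_subtractf)
  also have "(\<Sum>y\<in>UNIV. (q2 y - q1 y) * (V y - c)) \<le> (\<Sum>y\<in>UNIV. \<bar>q2 y - q1 y\<bar> * D)"
  proof (rule sum_mono)
    fix y
    have "0 \<le> V y - c" "V y - c \<le> D" using cle[of y] span[of y y0] y0 by auto
    then have "(q2 y - q1 y) * (V y - c) \<le> \<bar>q2 y - q1 y\<bar> * (V y - c)"
      by (simp add: mult_right_mono)
    also have "\<dots> \<le> \<bar>q2 y - q1 y\<bar> * D" using \<open>V y - c \<le> D\<close> by (simp add: mult_left_mono)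
    finally show "(q2 y - q1 y) * (V y - c) \<le> \<bar>q2 y - q1 y\<bar> * D" .
  qed
  finally have fin: "(\<Sum>y\<in>UNIV. (q2 y - q1 y) * V y) \<le> 0 * c + (\<Sum>y\<in>UNIV. \<bar>q2 y - q1 y\<bar> * D)" by simp
  have "(\<Sum>y\<in>UNIV. \<bar>q2 y - q1 y\<bar> * D) = (\<Sum>y\<in>UNIV. \<bar>q2 y - q1 y\<bar>) * D"
    by (rule sum_distrib_right[symmetric])
  then show ?thesis using fin by (simp add: mult.commute)
qed

lemma step_bound:
  fixes r1 r2 :: "'s::finite \<Rightarrow> 'a::finite \<Rightarrow> real" and p1 p2 :: "'s \<Rightarrow> 'a \<Rightarrow> 's \<Rightarrow> real"
  assumes m1: "is_mdp r1 p1" and m2: "is_mdp r2 p2"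
    and diam1: "diameter p1 \<le> ennreal D" and D0: "0 \<le> D"
    and er: "\<And>x a. \<bar>r2 x a - r1 x a\<bar> \<le> er"
    and ep: "\<And>x a. (\<Sum>y\<in>UNIV. \<bar>p2 x a y - p1 x a y\<bar>) \<le> ep"
  shows "opt_avg_reward r2 p2 s1 \<le> opt_avg_reward r1 p1 s1 + er + D * ep"
  unfolding opt_avg_reward_def[of r2]
proof (rule Max_range_le)
  fix pi :: "'s \<Rightarrow> 'a"
  define opt1 where "opt1 = opt_avg_reward r1 p1 s1"
  have r1b: "0 \<le> r1 x a" for x a using m1 unfolding is_mdp_def by auto
  have p10: "0 \<le> p1 x a y" for x a y using m1 unfolding is_mdp_def by auto
  have p11: "(\<Sum>y\<in>UNIV. p1 x a y) = 1" for x a using m1 unfolding is_mdp_def by auto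
  have p21: "(\<Sum>y\<in>UNIV. p2 x a y) = 1" for x a using m2 unfolding is_mdp_def by auto
  obtain q2 where q2: "\<And>x. 0 \<le> q2 x" "(\<Sum>x\<in>UNIV. q2 x) = 1"
      "\<And>y. (\<Sum>x\<in>UNIV. q2 x * p2 x (pi x) y) = q2 y"
      "avg_reward r2 p2 s1 pi = (\<Sum>x\<in>UNIV. q2 x * r2 x (pi x))"
    using avg_reward_stat[OF m2, of pi s1] by blast
  show "avg_reward r2 p2 s1 pi \<le> opt1 + er + D * ep"
  proof (rule field_le_epsilon)
    fix e :: real assume e: "0 < e"
    define \<gamma> where "\<gamma> = 1 - min (e / (2 * D + 2)) (1 / 2)"
    have g0: "0 \<le> \<gamma>" and g1: "\<gamma> < 1" unfolding \<gamma>_def using e D0 by auto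
    have gD: "2 * (1 - \<gamma>) * D \<le> e"
    proof -
      have "1 - \<gamma> \<le> e / (2 * D + 2)" unfolding \<gamma>_def by simp
      then have h: "(1 - \<gamma>) * D \<le> e / (2 * D + 2) * D" using D0 by (rule mult_right_mono)
      have "e / (2 * D + 2) * D \<le> e / 2" using e D0 by (simp add: field_simps)
      then show ?thesis using h by linarith
    qed
    obtain V pol1 where V0: "\<And>x. 0 \<le> V x" and VB: "\<And>x. V x \<le> 1 / (1 - \<gamma>)"
      and ineq1: "\<And>x a. r1 x a + \<gamma> * (\<Sum>y\<in>UNIV. p1 x a y * V y) \<le> V x"
      and ineq2: "\<And>x. V x \<le> r1 x (pol1 x) + \<gamma> * (\<Sum>y\<in>UNIV. p1 x (pol1 x) y * V y)"
      using disc_opt[OF m1 g0 g1] by blast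
    have super: "\<gamma> * (\<Sum>y\<in>UNIV. p1 x a y * V y) \<le> V x" for x a
      using ineq1[of x a] r1b[of x a] by linarith
    have span: "V y - V z \<le> D" for y z
      by (rule span_diam[OF m1 g0 g1 V0 VB super diam1 D0])
    obtain q1 where q1: "\<And>x. 0 \<le> q1 x" "(\<Sum>x\<in>UNIV. q1 x) = 1"
        "\<And>y. (\<Sum>x\<in>UNIV. q1 x * p1 x (pol1 x) y) = q1 y"
        "avg_reward r1 p1 s1 pol1 = (\<Sum>x\<in>UNIV. q1 x * r1 x (pol1 x))"
      using avg_reward_stat[OF m1, of pol1 s1] by blast
    have avg1: "avg_reward r1 p1 s1 pol1 \<le> opt1"
      unfolding opt1_def opt_avg_reward_def by (rule Max_range_ge)
    have "(\<Sum>x\<in>UNIV. q1 x * V x) \<le> (\<Sum>x\<in>UNIV. q1 x * (r1 x (pol1 x) + \<gamma> * (\<Sum>y\<in>UNIV. p1 x (pol1 x) y * V y)))"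
      by (intro sum_mono mult_left_mono ineq2 q1(1))
    also have "\<dots> = (\<Sum>x\<in>UNIV. q1 x * r1 x (pol1 x)) + \<gamma> * (\<Sum>x\<in>UNIV. q1 x * (\<Sum>y\<in>UNIV. p1 x (pol1 x) y * V y))"
      by (simp add: algebra_simps sum.distrib sum_distrib_left)
    also have "(\<Sum>x\<in>UNIV. q1 x * (\<Sum>y\<in>UNIV. p1 x (pol1 x) y * V y)) = (\<Sum>x\<in>UNIV. q1 x * V x)"
      by (rule stat_swap[where P="\<lambda>x y. p1 x (pol1 x) y"]) (rule q1(3))
    finally have "(\<Sum>x\<in>UNIV. q1 x * V x) \<le> avg_reward r1 p1 s1 pol1 + \<gamma> * (\<Sum>x\<in>UNIV. q1 x * V x)"
      using q1(4) by simp
    then have qV: "(1 - \<gamma>) * (\<Sum>x\<in>UNIV. q1 x * V x) \<le> opt1"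
      using avg1 by (simp add: algebra_simps)
    have "(\<Sum>x\<in>UNIV. q1 x * (V s1 - V x)) \<le> D"
      by (rule stoch_avg_le) (use q1 span in auto)
    then have Vs1: "V s1 \<le> (\<Sum>x\<in>UNIV. q1 x * V x) + D"
      using q1(2) by (simp add: right_diff_distrib sum_subtractf sum_distrib_right[symmetric])
    have Vs1': "(1 - \<gamma>) * V s1 \<le> opt1 + (1 - \<gamma>) * D"
    proof -
      have "(1 - \<gamma>) * V s1 \<le> (1 - \<gamma>) * ((\<Sum>x\<in>UNIV. q1 x * V x) + D)"
        using Vs1 g1 by (intro mult_left_mono) auto
      then show ?thesis using qV by (simp add: algebra_simps)
    qed
    define g where "g = opt1 + 2 * (1 - \<gamma>) * D"
    have key: "r1 x a + (\<Sum>y\<in>UNIV. p1 x a y * V y) \<le> V x + g" for x a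
    proof -
      have "(\<Sum>y\<in>UNIV. p1 x a y * V y) \<le> V s1 + D"
        by (rule stoch_avg_le) (use p10 p11 span in \<open>auto simp: algebra_simps\<close>)
      then have "(1 - \<gamma>) * (\<Sum>y\<in>UNIV. p1 x a y * V y) \<le> (1 - \<gamma>) * (V s1 + D)"
        using g1 by (intro mult_left_mono) auto
      then have "(1 - \<gamma>) * (\<Sum>y\<in>UNIV. p1 x a y * V y) \<le> opt1 + 2 * (1 - \<gamma>) * D"
        using Vs1' by (simp add: algebra_simps)
      then show ?thesis using ineq1[of x a] unfolding g_def by (simp add: algebra_simps)
    qed
    have pw: "r2 x (pi x) \<le> V x - (\<Sum>y\<in>UNIV. p2 x (pi x) y * V y) + (g + er + D * ep)" for x
    proof -
      have "(\<Sum>y\<in>UNIV. (p2 x (pi x) y - p1 x (pi x) y) * V y) \<le> D * (\<Sum>y\<in>UNIV. \<bar>p2 x (pi x) y - p1 x (pi x) y\<bar>)"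
        by (rule dp_bound) (use p11 p21 span D0 in auto)
      also have "\<dots> \<le> D * ep" by (rule mult_left_mono[OF ep D0])
      finally have d: "(\<Sum>y\<in>UNIV. p2 x (pi x) y * V y) - (\<Sum>y\<in>UNIV. p1 x (pi x) y * V y) \<le> D * ep"
        by (simp add: left_diff_distrib sum_subtractf)
      show ?thesis using key[of x "pi x"] d er[of x "pi x"] by linarith
    qed
    have "avg_reward r2 p2 s1 pi \<le> (\<Sum>x\<in>UNIV. q2 x * (V x - (\<Sum>y\<in>UNIV. p2 x (pi x) y * V y) + (g + er + D * ep)))"
      unfolding q2(4) by (intro sum_mono mult_left_mono pw q2(1))
    also have "\<dots> = (\<Sum>x\<in>UNIV. q2 x * V x) - (\<Sum>x\<in>UNIV. q2 x * (\<Sum>y\<in>UNIV. p2 x (pi x) y * V y)) + (g + er + D * ep)"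
    proof -
      define K where "K = g + er + D * ep"
      define A where "A x = (\<Sum>y\<in>UNIV. p2 x (pi x) y * V y)" for x
      have "(\<Sum>x\<in>UNIV. q2 x * (V x - A x + K)) = (\<Sum>x\<in>UNIV. (q2 x * V x - q2 x * A x) + q2 x * K)"
        by (rule sum.cong) (auto simp: algebra_simps)
      also have "\<dots> = (\<Sum>x\<in>UNIV. q2 x * V x - q2 x * A x) + (\<Sum>x\<in>UNIV. q2 x * K)"
        by (rule sum.distrib)
      also have "(\<Sum>x\<in>UNIV. q2 x * K) = (\<Sum>x\<in>UNIV. q2 x) * K" by (rule sum_distrib_right[symmetric])
      also have "(\<Sum>x\<in>UNIV. q2 x * V x - q2 x * A x) = (\<Sum>x\<in>UNIV. q2 x * V x) - (\<Sum>x\<in>UNIV. q2 x * A x)"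
        by (rule sum_subtractf)
      finally show ?thesis using q2(2) unfolding K_def A_def by simp
    qed
    also have "(\<Sum>x\<in>UNIV. q2 x * (\<Sum>y\<in>UNIV. p2 x (pi x) y * V y)) = (\<Sum>x\<in>UNIV. q2 x * V x)"
      by (rule stat_swap[where P="\<lambda>x y. p2 x (pi x) y"]) (rule q2(3))
    finally have "avg_reward r2 p2 s1 pi \<le> g + er + D * ep" by simp
    then show "avg_reward r2 p2 s1 pi \<le> opt1 + er + D * ep + e"
      using gD unfolding g_def by linarith
  qed
qed

lemma diam_ge1:
  fixes p :: "'s::finite \<Rightarrow> 'a::finite \<Rightarrow> 's \<Rightarrow> real" and s s' :: 's
  assumes ss: "s \<noteq> s'"
  shows "1 \<le> diameter p"
proof -
  have "1 \<le> exp_hit_time p pol s s'" for pol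
  proof -
    have s0: "(\<Sum>x\<in>UNIV. survive p pol s s' 0 x) = 1"
    proof -
      have "(\<Sum>x\<in>UNIV. survive p pol s s' 0 x) = (\<Sum>x\<in>UNIV. if x = s then 1 else 0)"
        using ss by (intro sum.cong) auto
      then show ?thesis by simp
    qed
    have "(\<Sum>k\<in>{0}. ennreal (\<Sum>x\<in>UNIV. survive p pol s s' k x)) \<le> (\<Sum>k. ennreal (\<Sum>x\<in>UNIV. survive p pol s s' k x))"
      by (rule sum_le_suminf) auto
    then show ?thesis unfolding exp_hit_time_def using s0 by simp
  qed
  then have "1 \<le> (INF pol. exp_hit_time p pol s s')" by (rule INF_greatest)
  also have "\<dots> \<le> diameter p"
    unfolding diameter_def by (rule SUP_upper2[where i="(s, s')"]) (use ss in auto)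
  finally show ?thesis .
qed

lemma diam_single:
  fixes p :: "'s::finite \<Rightarrow> 'a::finite \<Rightarrow> 's \<Rightarrow> real"
  assumes "\<And>s s'::'s. s = s'"
  shows "diameter p = 0"
proof -
  have "{(s, s'). (s::'s) \<noteq> s'} = {}" using assms by auto
  then show ?thesis unfolding diameter_def by (simp add: bot_ennreal)
qed

theorem theorem1:
  fixes r :: "nat \<Rightarrow> 's::finite \<Rightarrow> 'a::finite \<Rightarrow> real"
    and p :: "nat \<Rightarrow> 's \<Rightarrow> 'a \<Rightarrow> 's \<Rightarrow> real"
    and s1 :: 's and T :: nat and D :: real
  assumes mdp: "\<And>t. t \<in> {1..T} \<Longrightarrow> is_mdp (r t) (p t)"
    and comm: "\<And>t. t \<in> {1..T} \<Longrightarrow> communicating (p t)"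
    and diam: "\<And>t. t \<in> {1..T} \<Longrightarrow> diameter (p t) \<le> ennreal D"
  shows "(\<Sum>t\<in>{1..T-1}. \<bar>opt_avg_reward (r (t+1)) (p (t+1)) s1 - opt_avg_reward (r t) (p t) s1\<bar>)
    \<le> (\<Sum>t\<in>{1..T-1}. Max (range (\<lambda>(s, a). \<bar>r (t+1) s a - r t s a\<bar>)))
       + D * (\<Sum>t\<in>{1..T-1}. Max (range (\<lambda>(s, a). \<Sum>x\<in>UNIV. \<bar>p (t+1) s a x - p t s a x\<bar>)))"
proof -
  define Mr where "Mr t = Max (range (\<lambda>(s, a). \<bar>r (t+1) s a - r t s a\<bar>))" for t
  define Mp where "Mp t = Max (range (\<lambda>(s, a). \<Sum>x\<in>UNIV. \<bar>p (t+1) s a x - p t s a x\<bar>))" for t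
  have bound: "\<bar>opt_avg_reward (r (t+1)) (p (t+1)) s1 - opt_avg_reward (r t) (p t) s1\<bar> \<le> Mr t + D * Mp t"
    if t: "t \<in> {1..T-1}" for t
  proof -
    have t1: "t \<in> {1..T}" and t2: "t + 1 \<in> {1..T}" using t by auto
    note m1 = mdp[OF t1] and m2 = mdp[OF t2]
    have er: "\<bar>r (t+1) x a - r t x a\<bar> \<le> Mr t" for x a
      using Max_range_ge[of "\<lambda>(s, a). \<bar>r (t+1) s a - r t s a\<bar>" "(x, a)"] unfolding Mr_def by simp
    have er': "\<bar>r t x a - r (t+1) x a\<bar> \<le> Mr t" for x a
      using er[of x a] by (simp add: abs_minus_commute)
    have ep: "(\<Sum>y\<in>UNIV. \<bar>p (t+1) x a y - p t x a y\<bar>) \<le> Mp t" for x a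
      using Max_range_ge[of "\<lambda>(s, a). \<Sum>x\<in>UNIV. \<bar>p (t+1) s a x - p t s a x\<bar>" "(x, a)"] unfolding Mp_def by simp
    have ep': "(\<Sum>y\<in>UNIV. \<bar>p t x a y - p (t+1) x a y\<bar>) \<le> Mp t" for x a
      using ep[of x a] by (simp add: abs_minus_commute)
    show ?thesis
    proof (cases "0 \<le> D")
      case True
      have "opt_avg_reward (r (t+1)) (p (t+1)) s1 \<le> opt_avg_reward (r t) (p t) s1 + Mr t + D * Mp t"
        by (rule step_bound[OF m1 m2 diam[OF t1] True er ep])
      moreover have "opt_avg_reward (r t) (p t) s1 \<le> opt_avg_reward (r (t+1)) (p (t+1)) s1 + Mr t + D * Mp t"
        by (rule step_bound[OF m2 m1 diam[OF t2] True er' ep'])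
      ultimately show ?thesis by linarith
    next
      case False
      have single: "x = y" for x y :: 's
      proof (rule ccontr)
        assume "x \<noteq> y"
        then have "1 \<le> diameter (p t)" by (rule diam_ge1)
        also have "\<dots> \<le> ennreal D" by (rule diam[OF t1])
        also have "\<dots> = 0" using False by (simp add: ennreal_eq_0_iff)
        finally show False by simp
      qed
      have d0: "diameter (p t) \<le> ennreal 0" "diameter (p (t+1)) \<le> ennreal 0"
        using diam_single[OF single] by auto
      have "opt_avg_reward (r (t+1)) (p (t+1)) s1 \<le> opt_avg_reward (r t) (p t) s1 + Mr t + 0 * Mp t"
        by (rule step_bound[OF m1 m2 d0(1) _ er ep]) simp
      moreover have "opt_avg_reward (r t) (p t) s1 \<le> opt_avg_reward (r (t+1)) (p (t+1)) s1 + Mr t + 0 * Mp t"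
        by (rule step_bound[OF m2 m1 d0(2) _ er' ep']) simp
      moreover have "Mp t = 0"
      proof -
        have U: "UNIV = {x}" for x :: 's using single by auto
        have "(\<Sum>x\<in>UNIV. \<bar>p (t+1) s a x - p t s a x\<bar>) = 0" for s a
        proof -
          have "(\<Sum>x\<in>UNIV. p (t+1) s a x) = 1" "(\<Sum>x\<in>UNIV. p t s a x) = 1"
            using m1 m2 unfolding is_mdp_def by auto
          then have "p (t+1) s a s = 1" "p t s a s = 1" unfolding U[of s] by auto
          then show ?thesis unfolding U[of s] by simp
        qed
        then show ?thesis unfolding Mp_def by simp
      qed
      ultimately show ?thesis by simp
    qed
  qed
  have "(\<Sum>t\<in>{1..T-1}. \<bar>opt_avg_reward (r (t+1)) (p (t+1)) s1 - opt_avg_reward (r t) (p t) s1\<bar>)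
      \<le> (\<Sum>t\<in>{1..T-1}. Mr t + D * Mp t)"
    by (rule sum_mono) (rule bound)
  also have "\<dots> = (\<Sum>t\<in>{1..T-1}. Mr t) + D * (\<Sum>t\<in>{1..T-1}. Mp t)"
    by (simp add: sum.distrib sum_distrib_left)
  finally show ?thesis unfolding Mr_def Mp_def .
qed

end
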